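(* Let $i\ge 0$ be an integer. Every disk of an $\alpha_i$-metric graph $G$ is $d^{2i-1}$-convex. In particular, the center $C(G)$ of $G$ is $d^{2i-1}$-convex.
   Context: All graphs are finite, connected, unweighted, undirected, simple; $d(u,v)$ is the shortest-path distance. $I(u,v)=\{x: d(u,x)+d(x,v)=d(u,v)\}$. A graph is $\alpha_i$-metric if for all vertices $u,v,w,x$: whenever $v\in I(u,w)$, $w\in I(v,x)$ and $v,w$ are adjacent, then $d(u,x)\ge d(u,v)+d(v,x)-i$. A disk is $D(v,r)=\{u: d(u,v)\le r\}$. A vertex set $S$ is $d^k$-convex if for all $x,y\in S$ with $d(x,y)\ge k$, $I(x,y)\subseteq S$. $e(v)=\max_u d(u,v)$, $rad(G)=\min_v e(v)$, $C(G)=\{v:e(v)=rad(G)\}$. *)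

theory Defs
  imports Main
begin

definition simple_graph :: "'a set \<Rightarrow> ('a \<Rightarrow> 'a \<Rightarrow> bool) \<Rightarrow> bool" where
  "simple_graph V E \<longleftrightarrow> finite V \<and> V \<noteq> {} \<and>
     (\<forall>u v. E u v \<longrightarrow> u \<in> V \<and> v \<in> V) \<and>
     (\<forall>u v. E u v \<longrightarrow> E v u) \<and> (\<forall>u. \<not> E u u)"

definition is_walk :: "'a set \<Rightarrow> ('a \<Rightarrow> 'a \<Rightarrow> bool) \<Rightarrow> 'a list \<Rightarrow> bool" where
  "is_walk V E xs \<longleftrightarrow> xs \<noteq> [] \<and> set xs \<subseteq> V \<and>
     (\<forall>j. Suc j < length xs \<longrightarrow> E (xs ! j) (xs ! Suc j))"

definition connected_graph :: "'a set \<Rightarrow> ('a \<Rightarrow> 'a \<Rightarrow> bool) \<Rightarrow> bool" where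
  "connected_graph V E \<longleftrightarrow> simple_graph V E \<and>
     (\<forall>u\<in>V. \<forall>v\<in>V. \<exists>xs. is_walk V E xs \<and> hd xs = u \<and> last xs = v)"

definition gdist :: "'a set \<Rightarrow> ('a \<Rightarrow> 'a \<Rightarrow> bool) \<Rightarrow> 'a \<Rightarrow> 'a \<Rightarrow> nat" where
  "gdist V E u v = (LEAST n. \<exists>xs. is_walk V E xs \<and> hd xs = u \<and> last xs = v \<and> length xs = Suc n)"

definition interval :: "'a set \<Rightarrow> ('a \<Rightarrow> 'a \<Rightarrow> bool) \<Rightarrow> 'a \<Rightarrow> 'a \<Rightarrow> 'a set" where
  "interval V E u v = {x \<in> V. gdist V E u x + gdist V E x v = gdist V E u v}"

definition alpha_metric :: "'a set \<Rightarrow> ('a \<Rightarrow> 'a \<Rightarrow> bool) \<Rightarrow> nat \<Rightarrow> bool" where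
  "alpha_metric V E i \<longleftrightarrow> (\<forall>u\<in>V. \<forall>v\<in>V. \<forall>w\<in>V. \<forall>x\<in>V.
     v \<in> interval V E u w \<and> w \<in> interval V E v x \<and> E v w \<longrightarrow>
     int (gdist V E u x) \<ge> int (gdist V E u v) + int (gdist V E v x) - int i)"

definition disk :: "'a set \<Rightarrow> ('a \<Rightarrow> 'a \<Rightarrow> bool) \<Rightarrow> 'a \<Rightarrow> nat \<Rightarrow> 'a set" where
  "disk V E v r = {u \<in> V. gdist V E u v \<le> r}"

text \<open>d^k-convexity; k is an integer (k = 2i-1 may be -1).\<close>
definition dk_convex :: "'a set \<Rightarrow> ('a \<Rightarrow> 'a \<Rightarrow> bool) \<Rightarrow> int \<Rightarrow> 'a set \<Rightarrow> bool" where
  "dk_convex V E k S \<longleftrightarrow> (\<forall>x\<in>S. \<forall>y\<in>S. int (gdist V E x y) \<ge> k \<longrightarrow> interval V E x y \<subseteq> S)"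

definition ecc :: "'a set \<Rightarrow> ('a \<Rightarrow> 'a \<Rightarrow> bool) \<Rightarrow> 'a \<Rightarrow> nat" where
  "ecc V E v = Max ((\<lambda>u. gdist V E u v) ` V)"

definition radius :: "'a set \<Rightarrow> ('a \<Rightarrow> 'a \<Rightarrow> bool) \<Rightarrow> nat" where
  "radius V E = Min (ecc V E ` V)"

definition center :: "'a set \<Rightarrow> ('a \<Rightarrow> 'a \<Rightarrow> bool) \<Rightarrow> 'a set" where
  "center V E = {v \<in> V. ecc V E v = radius V E}"

end

theory Submission
  imports Defs
begin

lemma is_walk_Cons:
  "is_walk V E (x # ys) \<longleftrightarrow> x \<in> V \<and> (ys = [] \<or> (E x (hd ys) \<and> is_walk V E ys))"
proof
  assume H: "is_walk V E (x # ys)"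
  show "x \<in> V \<and> (ys = [] \<or> (E x (hd ys) \<and> is_walk V E ys))"
  proof (cases ys)
    case Nil then show ?thesis using H by (auto simp: is_walk_def)
  next
    case (Cons y zs)
    have "E x y" using H Cons unfolding is_walk_def by (metis length_Cons nth_Cons_0 nth_Cons_Suc zero_less_Suc Suc_less_eq)
    moreover have "\<forall>j. Suc j < length ys \<longrightarrow> E (ys ! j) (ys ! Suc j)"
      using H unfolding is_walk_def by (metis Suc_less_eq length_Cons nth_Cons_Suc)
    ultimately show ?thesis using H Cons by (auto simp: is_walk_def)
  qed
next
  assume H: "x \<in> V \<and> (ys = [] \<or> (E x (hd ys) \<and> is_walk V E ys))"
  show "is_walk V E (x # ys)"
  proof (cases ys)
    case Nil then show ?thesis using H by (auto simp: is_walk_def)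
  next
    case (Cons y zs)
    have "E ((x#ys) ! j) ((x#ys) ! Suc j)" if "Suc j < length (x#ys)" for j
    proof (cases j)
      case 0 then show ?thesis using H Cons by auto
    next
      case (Suc k) then show ?thesis using H that unfolding is_walk_def by auto
    qed
    then show ?thesis using H unfolding is_walk_def by auto
  qed
qed

lemma is_walk_single: "is_walk V E [x] \<longleftrightarrow> x \<in> V"
  by (simp add: is_walk_Cons)

lemma is_walk_append:
  "is_walk V E xs \<Longrightarrow> is_walk V E ys \<Longrightarrow> last xs = hd ys \<Longrightarrow> is_walk V E (xs @ tl ys)"
proof (induction xs)
  case Nil then show ?case by (simp add: is_walk_def)
next
  case (Cons x xs)
  show ?case
  proof (cases xs)
    case Nil
    then show ?thesis using Cons.prems
      by (cases ys) (auto simp: is_walk_Cons)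
  next
    case (Cons y zs)
    then show ?thesis using Cons.prems Cons.IH by (auto simp: is_walk_Cons)
  qed
qed

lemma is_walk_take: "is_walk V E xs \<Longrightarrow> 0 < k \<Longrightarrow> is_walk V E (take k xs)"
  unfolding is_walk_def by (auto dest: in_set_takeD)

context
  fixes V :: "'a set" and E :: "'a \<Rightarrow> 'a \<Rightarrow> bool"
  assumes G: "connected_graph V E"
begin

lemma sym_E: "E u v \<Longrightarrow> E v u"
  using G by (auto simp: connected_graph_def simple_graph_def)

lemma E_V: "E u v \<Longrightarrow> u \<in> V \<and> v \<in> V"
  using G by (auto simp: connected_graph_def simple_graph_def)

lemma irr_E: "\<not> E u u"
  using G by (auto simp: connected_graph_def simple_graph_def)

lemma finV: "finite V" and neV: "V \<noteq> {}"
  using G by (auto simp: connected_graph_def simple_graph_def)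

lemma is_walk_rev: "is_walk V E xs \<Longrightarrow> is_walk V E (rev xs)"
  unfolding is_walk_def
proof (intro conjI allI impI)
  fix j assume H: "xs \<noteq> [] \<and> set xs \<subseteq> V \<and> (\<forall>j. Suc j < length xs \<longrightarrow> E (xs ! j) (xs ! Suc j))"
    and j: "Suc j < length (rev xs)"
  let ?n = "length xs"
  have "E (xs ! (?n - Suc (Suc j))) (xs ! Suc (?n - Suc (Suc j)))" using H j by auto
  moreover have "Suc (?n - Suc (Suc j)) = ?n - Suc j" using j by auto
  ultimately show "E (rev xs ! j) (rev xs ! Suc j)" using j
    by (auto simp: rev_nth intro: sym_E)
qed auto

lemma walk_ex:
  assumes "u \<in> V" "v \<in> V"
  shows "\<exists>xs. is_walk V E xs \<and> hd xs = u \<and> last xs = v \<and> length xs = Suc (gdist V E u v)"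
proof -
  obtain xs where xs: "is_walk V E xs" "hd xs = u" "last xs = v"
    using G assms by (auto simp: connected_graph_def)
  then have "xs \<noteq> []" by (simp add: is_walk_def)
  then have "\<exists>n xs. is_walk V E xs \<and> hd xs = u \<and> last xs = v \<and> length xs = Suc n"
    using xs by (metis length_Suc_conv neq_Nil_conv)
  then show ?thesis unfolding gdist_def by (rule LeastI_ex)
qed

lemma walk_le:
  assumes "is_walk V E xs" "hd xs = u" "last xs = v"
  shows "gdist V E u v < length xs"
proof -
  have "xs \<noteq> []" using assms by (simp add: is_walk_def)
  then obtain n where n: "length xs = Suc n" by (cases xs) auto
  have "gdist V E u v \<le> n" unfolding gdist_def
    by (rule Least_le) (use assms n in blast)
  then show ?thesis using n by simp
qed

lemma d_sym: "u \<in> V \<Longrightarrow> v \<in> V \<Longrightarrow> gdist V E u v = gdist V E v u"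
proof -
  have A: "gdist V E b a \<le> gdist V E a b" if ab: "a \<in> V" "b \<in> V" for a b
  proof -
    obtain xs where xs: "is_walk V E xs" "hd xs = a" "last xs = b" "length xs = Suc (gdist V E a b)"
      using walk_ex[OF ab] by blast
    have "xs \<noteq> []" using xs by (simp add: is_walk_def)
    then have "gdist V E b a < length (rev xs)"
      using xs by (intro walk_le is_walk_rev) (auto simp: hd_rev last_rev)
    then show ?thesis using xs by simp
  qed
  assume "u \<in> V" "v \<in> V" then show ?thesis using A by (meson le_antisym)
qed

lemma d_tri: "u \<in> V \<Longrightarrow> v \<in> V \<Longrightarrow> w \<in> V \<Longrightarrow> gdist V E u w \<le> gdist V E u v + gdist V E v w"
proof -
  assume "u \<in> V" "v \<in> V" "w \<in> V"
  then obtain xs ys where xs: "is_walk V E xs" "hd xs = u" "last xs = v" "length xs = Suc (gdist V E u v)"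
    and ys: "is_walk V E ys" "hd ys = v" "last ys = w" "length ys = Suc (gdist V E v w)"
    using walk_ex by meson
  have ne: "xs \<noteq> []" "ys \<noteq> []" using xs ys by (auto simp: is_walk_def)
  have "last (xs @ tl ys) = w"
    using ne xs ys by (cases ys) auto
  moreover have "hd (xs @ tl ys) = u" using ne xs by simp
  ultimately have "gdist V E u w < length (xs @ tl ys)"
    using xs ys by (intro walk_le is_walk_append) auto
  then show ?thesis using xs ys ne by simp
qed

lemma d_self: "u \<in> V \<Longrightarrow> gdist V E u u = 0"
  using walk_le[of "[u]" u u] by (simp add: is_walk_single)

lemma d_zero: "u \<in> V \<Longrightarrow> v \<in> V \<Longrightarrow> gdist V E u v = 0 \<Longrightarrow> u = v"
  using walk_ex[of u v] by (auto simp: length_Suc_conv)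

lemma d_edge: "E u v \<Longrightarrow> gdist V E u v = 1"
proof -
  assume e: "E u v"
  then have "is_walk V E [u, v]" using E_V by (auto simp: is_walk_Cons)
  then have "gdist V E u v < 2" using walk_le[of "[u,v]" u v] by simp
  moreover have "gdist V E u v \<noteq> 0" using d_zero e E_V irr_E by metis
  ultimately show ?thesis by simp
qed

lemma d_step:
  assumes "x \<in> V" "z \<in> V" "gdist V E x z = Suc n"
  shows "\<exists>a. E a z \<and> gdist V E x a = n"
proof -
  obtain xs where xs: "is_walk V E xs" "hd xs = x" "last xs = z" "length xs = Suc (Suc n)"
    using walk_ex assms by metis
  let ?a = "xs ! n"
  have e: "E ?a (xs ! Suc n)" using xs by (auto simp: is_walk_def)
  have "xs ! Suc n = z" using xs by (metis diff_Suc_1 last_conv_nth list.size(3) nat.distinct(1) xs(4))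
  then have ea: "E ?a z" using e by simp
  have aV: "?a \<in> V" using E_V ea by blast
  have "take (Suc n) xs \<noteq> []" using xs by (auto simp: is_walk_def)
  moreover have "hd (take (Suc n) xs) = x" using xs by (cases xs) auto
  moreover have "last (take (Suc n) xs) = ?a" using xs by (subst last_conv_nth) (auto simp: min_def)
  moreover have "is_walk V E (take (Suc n) xs)" using xs(1) by (rule is_walk_take) simp
  ultimately have "gdist V E x ?a < length (take (Suc n) xs)"
    by (intro walk_le) auto
  then have "gdist V E x ?a < Suc n" using xs by simp
  moreover have "gdist V E x z \<le> gdist V E x ?a + gdist V E ?a z"
    using d_tri assms aV by blast
  ultimately show ?thesis using ea d_edge assms by (intro exI[of _ ?a]) auto
qed

lemma interval_sym: "x \<in> V \<Longrightarrow> y \<in> V \<Longrightarrow> interval V E x y = interval V E y x"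
  unfolding interval_def using d_sym by auto

lemma side:
  assumes al: "alpha_metric V E i" and cV: "c \<in> V" and xV: "x \<in> V" and yV: "y \<in> V"
    and xr: "gdist V E x c \<le> r" and yr: "gdist V E y c \<le> r"
    and zI: "z \<in> interval V E x y" and zr: "gdist V E z c > r"
    and mx: "\<forall>w\<in>interval V E x y. gdist V E w c \<le> gdist V E z c"
    and mn: "\<forall>w\<in>interval V E x y. gdist V E w c = gdist V E z c \<longrightarrow> gdist V E x z \<le> gdist V E x w"
  shows "int (gdist V E y c) \<ge> int (gdist V E y z) + int (gdist V E z c) - int i"
proof -
  have zV: "z \<in> V" and zd: "gdist V E x z + gdist V E z y = gdist V E x y"
    using zI by (auto simp: interval_def)
  have "z \<noteq> x" using xr zr by auto
  then have "gdist V E x z \<noteq> 0" using d_zero xV zV by metis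
  then obtain n where n: "gdist V E x z = Suc n" by (cases "gdist V E x z") auto
  then obtain a where ea: "E a z" and an: "gdist V E x a = n" using d_step xV zV by metis
  have aV: "a \<in> V" using E_V ea by blast
  have az: "gdist V E a z = 1" "gdist V E z a = 1" using d_edge ea sym_E by auto
  have "gdist V E a y \<le> gdist V E a z + gdist V E z y" using d_tri aV zV yV by blast
  moreover have "gdist V E x y \<le> gdist V E x a + gdist V E a y" using d_tri aV xV yV by blast
  ultimately have ay: "gdist V E a y = 1 + gdist V E z y" using zd n an az by linarith
  have aI: "a \<in> interval V E x y" unfolding interval_def using aV ay zd n an by simp
  have "gdist V E a c \<noteq> gdist V E z c" using mn aI an n by fastforce
  then have lt: "gdist V E a c < gdist V E z c" using mx aI by fastforce
  have "gdist V E z c \<le> gdist V E z a + gdist V E a c" using d_tri aV zV cV by blast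
  then have ac: "gdist V E a c + 1 = gdist V E z c" using lt az by linarith
  have "z \<in> interval V E y a" unfolding interval_def
    using zV ay d_sym[OF yV zV] d_sym[OF yV aV] az by simp
  moreover have "a \<in> interval V E z c" unfolding interval_def using aV ac az by simp
  ultimately show ?thesis using al yV zV aV cV sym_E[OF ea] unfolding alpha_metric_def by blast
qed

lemma disk_convex:
  assumes al: "alpha_metric V E i" and cV: "c \<in> V"
  shows "dk_convex V E (2 * int i - 1) (disk V E c r)"
  unfolding dk_convex_def
proof (intro ballI impI subsetI)
  fix x y z
  assume xD: "x \<in> disk V E c r" and yD: "y \<in> disk V E c r"
    and dxy: "2 * int i - 1 \<le> int (gdist V E x y)" and zI: "z \<in> interval V E x y"
  have xV: "x \<in> V" and yV: "y \<in> V" and xr: "gdist V E x c \<le> r" and yr: "gdist V E y c \<le> r"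
    using xD yD by (auto simp: disk_def)
  have zV: "z \<in> V" using zI by (simp add: interval_def)
  show "z \<in> disk V E c r"
  proof (rule ccontr)
    assume "z \<notin> disk V E c r"
    then have zr: "gdist V E z c > r" using zV by (simp add: disk_def)
    let ?I = "interval V E x y"
    have finI: "finite ?I" using finV by (rule rev_finite_subset) (auto simp: interval_def)
    define m where "m = Max ((\<lambda>w. gdist V E w c) ` ?I)"
    have mge: "gdist V E w c \<le> m" if "w \<in> ?I" for w
      unfolding m_def using finI that by auto
    have "m \<in> (\<lambda>w. gdist V E w c) ` ?I" unfolding m_def using finI zI by (intro Max_in) auto
    then obtain z0 where z0: "z0 \<in> ?I" "gdist V E z0 c = m" by auto
    define M where "M = {w \<in> ?I. gdist V E w c = m}"
    have finM: "finite M" using finI by (simp add: M_def)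
    have z0M: "z0 \<in> M" using z0 by (simp add: M_def)
    have "m > r" using mge[OF zI] zr by simp
    define k1 where "k1 = Min ((\<lambda>w. gdist V E x w) ` M)"
    have "k1 \<in> (\<lambda>w. gdist V E x w) ` M" unfolding k1_def using finM z0M by (intro Min_in) auto
    then obtain z1 where z1: "z1 \<in> M" "gdist V E x z1 = k1" by auto
    have k1le: "k1 \<le> gdist V E x w" if "w \<in> M" for w unfolding k1_def using finM that by auto
    define k2 where "k2 = Min ((\<lambda>w. gdist V E y w) ` M)"
    have "k2 \<in> (\<lambda>w. gdist V E y w) ` M" unfolding k2_def using finM z0M by (intro Min_in) auto
    then obtain z2 where z2: "z2 \<in> M" "gdist V E y z2 = k2" by auto
    have k2le: "k2 \<le> gdist V E y w" if "w \<in> M" for w unfolding k2_def using finM that by auto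
    have z1I: "z1 \<in> ?I" and z1m: "gdist V E z1 c = m" using z1 by (auto simp: M_def)
    have z2I: "z2 \<in> ?I" and z2m: "gdist V E z2 c = m" using z2 by (auto simp: M_def)
    have s1: "int (gdist V E y c) \<ge> int (gdist V E y z1) + int (gdist V E z1 c) - int i"
      apply (rule side[OF al cV xV yV xr yr z1I])
      using z1m \<open>m > r\<close> mge z1 k1le by (auto simp: M_def)
    have IS: "interval V E y x = ?I" using interval_sym xV yV by blast
    have s2: "int (gdist V E x c) \<ge> int (gdist V E x z2) + int (gdist V E z2 c) - int i"
      apply (rule side[OF al cV yV xV yr xr])
      using z2I z2m \<open>m > r\<close> mge z2 k2le IS by (auto simp: M_def)
    have z2V: "z2 \<in> V" and z2d: "gdist V E x z2 + gdist V E z2 y = gdist V E x y"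
      using z2I by (auto simp: interval_def)
    have z1V: "z1 \<in> V" using z1I by (simp add: interval_def)
    have "gdist V E z2 y = gdist V E y z2" using d_sym z2V yV by simp
    also have "\<dots> \<le> gdist V E y z1" using k2le z1 z2 by simp
    finally have "gdist V E z2 y \<le> gdist V E y z1" .
    then show False using s1 s2 z1m z2m xr yr \<open>m > r\<close> z2d dxy by linarith
  qed
qed

lemma center_char: "center V E = {v \<in> V. \<forall>u\<in>V. gdist V E u v \<le> radius V E}"
proof -
  have "ecc V E v = radius V E \<longleftrightarrow> (\<forall>u\<in>V. gdist V E u v \<le> radius V E)" if v: "v \<in> V" for v
  proof -
    have r: "radius V E \<le> ecc V E v" unfolding radius_def using finV v by auto
    have e: "ecc V E v \<le> k \<longleftrightarrow> (\<forall>u\<in>V. gdist V E u v \<le> k)" for k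
      unfolding ecc_def using finV neV by (simp add: Max_le_iff)
    show ?thesis using r e[of "radius V E"] by auto
  qed
  then show ?thesis unfolding center_def by auto
qed

end

theorem lemma3:
  fixes V :: "'a set" and E :: "'a \<Rightarrow> 'a \<Rightarrow> bool" and i :: nat
  assumes "connected_graph V E"
    and "alpha_metric V E i"
  shows "(\<forall>v\<in>V. \<forall>r::nat. dk_convex V E (2 * int i - 1) (disk V E v r))
         \<and> dk_convex V E (2 * int i - 1) (center V E)"
proof
  show D: "\<forall>v\<in>V. \<forall>r::nat. dk_convex V E (2 * int i - 1) (disk V E v r)"
    using disk_convex[OF assms(1) assms(2)] by blast
  show "dk_convex V E (2 * int i - 1) (center V E)"
    unfolding dk_convex_def
  proof (intro ballI impI subsetI)
    fix x y z assume x: "x \<in> center V E" and y: "y \<in> center V E"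
      and d: "2 * int i - 1 \<le> int (gdist V E x y)" and z: "z \<in> interval V E x y"
    have zV: "z \<in> V" using z by (simp add: interval_def)
    have "gdist V E u z \<le> radius V E" if u: "u \<in> V" for u
    proof -
      have "x \<in> disk V E u (radius V E)" "y \<in> disk V E u (radius V E)"
        using x y u center_char[OF assms(1)] d_sym[OF assms(1)] by (auto simp: disk_def)
      then have "z \<in> disk V E u (radius V E)"
        using D u d z unfolding dk_convex_def by blast
      then show ?thesis using d_sym[OF assms(1)] u zV by (auto simp: disk_def)
    qed
    then show "z \<in> center V E" using center_char[OF assms(1)] zV by auto
  qed
qed

end
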